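(* Let $(x_n)_{n\ge1}$ be a monotone increasing sequence of positive integers such that for some $r>0$ and all $N$, $$E_N:=\#\{(a,b,c,d)\in[1,N]^4 : x_a+x_b=x_c+x_d\}\ge rN^3.$$ Then there exist increasing sequences of positive integers $(n_k)_{k\ge1}$ and $(a_N)_{N\ge1}$ with $n_k\to\infty$, $a_N\to\infty$, such that $(n_k)$ has density bounded from below in $\{1,\dots,a_N\}$ (i.e. there is $c>0$ with $\#\{k : n_k\le a_N\}\ge c\,a_N$ for all $N$), and for every $\varepsilon>0$ and almost every $\alpha\in\mathbb{R}$, $$\min\big\{\|\alpha x_{n_k}-\alpha x_{n_l}\| : k\ne l,\ n_k,n_l\le a_N\big\}\gg\frac{1}{a_N(\log a_N)^{1+\varepsilon}},$$ where the implied constant may depend on $\alpha$ and $\varepsilon$.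
   Context: For $x\in\mathbb{R}$, $\|x\|=\min_{k\in\mathbb{Z}}|x-k|$ is the distance to the nearest integer. The left-hand side of the conclusion is the minimal gap modulo 1 among the points $\alpha x_{n_k}$ with $n_k\le a_N$ (written $\delta_{\min}^{\alpha}(x_{n_k},a_N)$ in the paper). *)

theory Defs
  imports "HOL-Analysis.Analysis"
begin

definition dist_nearest_int :: "real \<Rightarrow> real" where
  "dist_nearest_int x = (INF k::int. \<bar>x - real_of_int k\<bar>)"

definition add_energy :: "(nat \<Rightarrow> nat) \<Rightarrow> nat \<Rightarrow> nat" where
  "add_energy x N = card {(a, b, c, d). a \<in> {1..N} \<and> b \<in> {1..N} \<and> c \<in> {1..N} \<and> d \<in> {1..N}
                                        \<and> x a + x b = x c + x d}"

definition delta_min :: "real \<Rightarrow> (nat \<Rightarrow> nat) \<Rightarrow> (nat \<Rightarrow> nat) \<Rightarrow> nat \<Rightarrow> real" where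
  "delta_min \<alpha> x n A = Min {dist_nearest_int (\<alpha> * real (x (n k)) - \<alpha> * real (x (n l))) | k l.
                             1 \<le> k \<and> 1 \<le> l \<and> k \<noteq> l \<and> n k \<le> A \<and> n l \<le> A}"

end

theory Submission
  imports Defs "HOL-Analysis.Analysis" "HOL-Library.Infinite_Set"
begin

definition rset :: "int set \<Rightarrow> int \<Rightarrow> (int \<times> int) set" where
  "rset V p = {(a,b). a \<in> V \<and> b \<in> V \<and> a - b = p}"

definition qset :: "int set \<Rightarrow> (int \<times> int \<times> int \<times> int) set" where
  "qset V = {(a,b,c,d). a \<in> V \<and> b \<in> V \<and> c \<in> V \<and> d \<in> V \<and> a + b = c + d}"

lemma finite_rset: "finite V \<Longrightarrow> finite (rset V p)"
  by (rule finite_subset[of _ "V \<times> V"]) (auto simp: rset_def)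

lemma card_rset_le: assumes "finite V" shows "card (rset V p) \<le> card V"
proof -
  have "inj_on fst (rset V p)" by (auto simp: rset_def inj_on_def)
  moreover have "fst ` rset V p \<subseteq> V" by (auto simp: rset_def)
  ultimately show ?thesis using card_inj_on_le assms by blast
qed

lemma card_qset_le:
  assumes "finite V"
  shows "card (qset V) \<le> (\<Sum>ac\<in>V \<times> V. card (rset V (fst ac - snd ac)))"
proof -
  have "qset V \<subseteq> (\<lambda>(ac, db). (fst ac, snd db, snd ac, fst db)) ` (SIGMA ac:V \<times> V. rset V (fst ac - snd ac))"
  proof
    fix q assume "q \<in> qset V"
    then obtain a b c d where q: "q = (a,b,c,d)" "a \<in> V" "b \<in> V" "c \<in> V" "d \<in> V" "a + b = c + d"
      by (auto simp: qset_def)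
    then have "((a,c),(d,b)) \<in> (SIGMA ac:V \<times> V. rset V (fst ac - snd ac))"
      by (auto simp: rset_def)
    then show "q \<in> (\<lambda>(ac, db). (fst ac, snd db, snd ac, fst db)) ` (SIGMA ac:V \<times> V. rset V (fst ac - snd ac))"
      using q by (auto intro!: image_eqI[where x="((a,c),(d,b))"])
  qed
  then have "card (qset V) \<le> card ((\<lambda>(ac, db). (fst ac, snd db, snd ac, fst db)) ` (SIGMA ac:V \<times> V. rset V (fst ac - snd ac)))"
    by (intro card_mono finite_imageI) (auto intro!: finite_SigmaI simp: assms finite_rset)
  also have "\<dots> \<le> card (SIGMA ac:V \<times> V. rset V (fst ac - snd ac))"
    by (rule card_image_le) (auto intro!: finite_SigmaI simp: assms finite_rset)
  also have "\<dots> = (\<Sum>ac\<in>V \<times> V. card (rset V (fst ac - snd ac)))"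
    by (simp add: assms finite_rset)
  finally show ?thesis .
qed

lemma edges_large:
  fixes V :: "int set" and \<eta> :: real
  assumes fin: "finite V" and eta: "\<eta> > 0"
    and E: "real (card (qset V)) \<ge> \<eta> * real (card V) ^ 3"
    and P: "P = {p \<in> (\<lambda>(a,b). a - b) ` (V \<times> V). real (card (rset V p)) \<ge> \<eta> * real (card V) / 2}"
    and G: "G = {(a,b) \<in> V \<times> V. a - b \<in> P}"
  shows "real (card G) \<ge> \<eta> * real (card V) ^ 2 / 2"
proof -
  define m where "m = real (card V)"
  let ?f = "\<lambda>ac. real (card (rset V (fst ac - snd ac)))"
  have GV: "G \<subseteq> V \<times> V" using G by auto
  have finVV: "finite (V \<times> V)" using fin by auto
  have "real (card (qset V)) \<le> (\<Sum>ac\<in>V \<times> V. ?f ac)"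
    unfolding of_nat_sum[symmetric] of_nat_le_iff by (rule card_qset_le[OF fin])
  also have "\<dots> = (\<Sum>ac\<in>G. ?f ac) + (\<Sum>ac\<in>V \<times> V - G. ?f ac)"
    using sum.subset_diff[OF GV finVV, of ?f] by linarith
  also have "(\<Sum>ac\<in>G. ?f ac) \<le> (\<Sum>ac\<in>G. m)"
    by (intro sum_mono) (use card_rset_le[OF fin] in \<open>auto simp: m_def\<close>)
  also have "(\<Sum>ac\<in>V \<times> V - G. ?f ac) \<le> (\<Sum>ac\<in>V \<times> V - G. \<eta> * m / 2)"
  proof (intro sum_mono)
    fix ac assume ac: "ac \<in> V \<times> V - G"
    then have "fst ac - snd ac \<notin> P" using G by (cases ac) auto
    moreover have "fst ac - snd ac \<in> (\<lambda>(a,b). a - b) ` (V \<times> V)" using ac by (cases ac) force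
    ultimately show "?f ac \<le> \<eta> * m / 2" using P by (auto simp: m_def)
  qed
  finally have "\<eta> * m ^ 3 \<le> real (card G) * m + real (card (V \<times> V - G)) * (\<eta> * m / 2)"
    using E by (simp add: m_def)
  also have "card (V \<times> V - G) \<le> card (V \<times> V)" by (rule card_mono[OF finVV]) auto
  then have "real (card (V \<times> V - G)) \<le> real (card V * card V)"
    by (simp only: of_nat_le_iff card_cartesian_product)
  then have "real (card (V \<times> V - G)) \<le> m ^ 2" by (simp add: m_def power2_eq_square)
  then have "real (card (V \<times> V - G)) * (\<eta> * m / 2) \<le> m ^ 2 * (\<eta> * m / 2)"
    using eta by (intro mult_right_mono) (auto simp: m_def)
  finally have "\<eta> * m ^ 3 \<le> real (card G) * m + m ^ 2 * (\<eta> * m / 2)" by simp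
  then have "\<eta> * m ^ 3 / 2 \<le> real (card G) * m" by (simp add: power3_eq_cube power2_eq_square algebra_simps)
  show ?thesis
  proof (cases "m = 0")
    case True then show ?thesis by (simp add: m_def)
  next
    case False
    then have "m > 0" by (simp add: m_def)
    have "(\<eta> * m ^ 2 / 2) * m \<le> real (card G) * m"
      using \<open>\<eta> * m ^ 3 / 2 \<le> real (card G) * m\<close> by (simp add: power3_eq_cube power2_eq_square mult_ac)
    then have "\<eta> * m ^ 2 / 2 \<le> real (card G)" using \<open>m > 0\<close> by (rule mult_right_le_imp_le)
    then show ?thesis by (simp add: m_def)
  qed
qed

lemma P_small:
  fixes V :: "int set" and \<eta> :: real
  assumes fin: "finite V" and eta: "\<eta> > 0" and Vne: "V \<noteq> {}"
    and P: "P = {p \<in> (\<lambda>(a,b). a - b) ` (V \<times> V). real (card (rset V p)) \<ge> \<eta> * real (card V) / 2}"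
  shows "real (card P) \<le> 2 * real (card V) / \<eta>" "finite P"
proof -
  show finP: "finite P" using P fin by auto
  have "card (SIGMA p:P. rset V p) \<le> card (V \<times> V)"
    by (rule card_inj_on_le[where f=snd]) (auto simp: inj_on_def rset_def fin)
  then have "(\<Sum>p\<in>P. real (card (rset V p))) \<le> real (card V) ^ 2"
    using finP fin by (simp add: finite_rset card_cartesian_product power2_eq_square flip: of_nat_sum of_nat_mult)
  moreover have "(\<Sum>p\<in>P. \<eta> * real (card V) / 2) \<le> (\<Sum>p\<in>P. real (card (rset V p)))"
    by (intro sum_mono) (auto simp: P)
  ultimately have "real (card P) * (\<eta> * real (card V) / 2) \<le> real (card V) ^ 2" by simp
  moreover have "card V > 0" using fin Vne by auto
  ultimately show "real (card P) \<le> 2 * real (card V) / \<eta>"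
    using eta by (simp add: field_simps power2_eq_square)
qed

definition codeg :: "('a \<times> 'a) set \<Rightarrow> 'a set \<Rightarrow> 'a \<Rightarrow> 'a \<Rightarrow> nat" where
  "codeg G V a a' = card {b \<in> V. (a,b) \<in> G \<and> (a',b) \<in> G}"

lemma card_diff2_ge:
  assumes "finite A" shows "card A \<le> card (A - B - C) + card (B \<inter> A) + card (C \<inter> A)"
proof -
  have "A \<subseteq> (A - B - C) \<union> (B \<inter> A) \<union> (C \<inter> A)" by auto
  then have "card A \<le> card ((A - B - C) \<union> (B \<inter> A) \<union> (C \<inter> A))"
    using assms by (intro card_mono) auto
  also have "\<dots> \<le> card (A - B - C) + card (B \<inter> A) + card (C \<inter> A)"
    by (metis (no_types, lifting) add_le_mono card_Un_le le_trans order_refl)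
  finally show ?thesis .
qed

lemma exists_ge_avg:
  fixes f :: "'b \<Rightarrow> real"
  assumes "finite V" "V \<noteq> {}" "(\<Sum>b\<in>V. f b) \<ge> real (card V) * c"
  shows "\<exists>b\<in>V. f b \<ge> c"
proof (rule ccontr)
  assume "\<not> ?thesis"
  then have "\<forall>b\<in>V. f b < c" by auto
  then have "(\<Sum>b\<in>V. f b) < (\<Sum>b\<in>V. c)" using assms by (intro sum_strict_mono) auto
  then show False using assms by simp
qed

lemma graph_paths:
  fixes V :: "'a set" and G :: "('a \<times> 'a) set" and \<alpha> :: real
  assumes fin: "finite V" and GV: "G \<subseteq> V \<times> V" and alpha: "\<alpha> > 0"
    and Gbig: "real (card G) \<ge> \<alpha> * real (card V) ^ 2"
  shows "\<exists>V' \<subseteq> V. real (card V') \<ge> \<alpha> * real (card V) / 4 \<and>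
     (\<forall>a\<in>V'. \<forall>a'\<in>V'. real (card {a1 \<in> V. real (codeg G V a a1) \<ge> \<alpha>\<^sup>2 / 16 * real (card V)
                                       \<and> real (codeg G V a' a1) \<ge> \<alpha>\<^sup>2 / 16 * real (card V)})
                     \<ge> \<alpha> * real (card V) / 4)"
proof -
  define m where "m = real (card V)"
  define \<beta> where "\<beta> = \<alpha>\<^sup>2 / 16"
  have beta: "\<beta> > 0" using alpha by (simp add: \<beta>_def)
  define Nb where "Nb b = {a \<in> V. (a,b) \<in> G}" for b
  define Bad where "Bad = {(a,a') \<in> V \<times> V. real (codeg G V a a') < \<beta> * m}"
  define badb where "badb b = card (Bad \<inter> (Nb b \<times> Nb b))" for b
  have finG: "finite G" using GV fin finite_subset by blast
  have finNb: "finite (Nb b)" for b using fin by (simp add: Nb_def)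
  show ?thesis
  proof (cases "V = {}")
    case True
    then show ?thesis by auto
  next
    case Vne: False
    then have mpos: "m > 0" using fin by (simp add: m_def card_gt_0_iff)
    have "card G = card (SIGMA b:V. Nb b)"
    proof -
      have "G = (\<lambda>(b,a). (a,b)) ` (SIGMA b:V. Nb b)" using GV by (auto simp: Nb_def image_iff)
      moreover have "inj_on (\<lambda>(b,a). (a,b)) (SIGMA b:V. Nb b)" by (auto simp: inj_on_def)
      ultimately show ?thesis by (simp add: card_image)
    qed
    also have "\<dots> = (\<Sum>b\<in>V. card (Nb b))" using fin finNb by simp
    finally have sumdeg: "real (card G) = (\<Sum>b\<in>V. real (card (Nb b)))" by simp
    have "(\<Sum>b\<in>V. real (card (Nb b)))\<^sup>2 \<le> (\<Sum>b\<in>V. (real (card (Nb b)))\<^sup>2) * m"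
      unfolding m_def by (rule sum_squared_le_sum_of_squares)
    moreover have "(\<alpha> * m\<^sup>2)\<^sup>2 \<le> (\<Sum>b\<in>V. real (card (Nb b)))\<^sup>2"
      using Gbig sumdeg alpha by (intro power_mono) (auto simp: m_def)
    ultimately have "(\<alpha> * m\<^sup>2)\<^sup>2 \<le> (\<Sum>b\<in>V. (real (card (Nb b)))\<^sup>2) * m" by linarith
    then have "(\<alpha>\<^sup>2 * m ^ 3) * m \<le> (\<Sum>b\<in>V. (real (card (Nb b)))\<^sup>2) * m"
      by (simp add: power2_eq_square power3_eq_cube mult_ac)
    then have sq: "\<alpha>\<^sup>2 * m ^ 3 \<le> (\<Sum>b\<in>V. (real (card (Nb b)))\<^sup>2)"
      using mpos by (rule mult_right_le_imp_le)
    have finBad: "finite Bad" by (rule finite_subset[of _ "V \<times> V"]) (auto simp: Bad_def fin)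
    have "(\<Sum>b\<in>V. real (badb b)) = (\<Sum>b\<in>V. \<Sum>x\<in>Bad. if (fst x, b) \<in> G \<and> (snd x, b) \<in> G then 1 else 0)"
    proof (intro sum.cong refl)
      fix b assume "b \<in> V"
      have "Bad \<inter> (Nb b \<times> Nb b) = {x \<in> Bad. (fst x, b) \<in> G \<and> (snd x, b) \<in> G}"
        by (auto simp: Nb_def Bad_def)
      then show "real (badb b) = (\<Sum>x\<in>Bad. if (fst x, b) \<in> G \<and> (snd x, b) \<in> G then 1 else 0)"
        using finBad by (simp add: badb_def sum.inter_filter[symmetric])
    qed
    also have "\<dots> = (\<Sum>x\<in>Bad. \<Sum>b\<in>V. if (fst x, b) \<in> G \<and> (snd x, b) \<in> G then 1 else 0)"
      by (rule sum.swap)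
    also have "\<dots> = (\<Sum>x\<in>Bad. real (codeg G V (fst x) (snd x)))"
      using fin by (intro sum.cong refl) (simp add: codeg_def sum.inter_filter[symmetric])
    also have "\<dots> \<le> (\<Sum>x\<in>Bad. \<beta> * m)"
      by (intro sum_mono) (auto simp: Bad_def)
    also have "\<dots> = real (card Bad) * (\<beta> * m)" by simp
    also have "\<dots> \<le> m\<^sup>2 * (\<beta> * m)"
    proof -
      have "card Bad \<le> card (V \<times> V)" using fin by (intro card_mono) (auto simp: Bad_def)
      then have "real (card Bad) \<le> m\<^sup>2" by (simp add: m_def card_cartesian_product power2_eq_square flip: of_nat_mult)
      then show ?thesis using beta mpos by (intro mult_right_mono) auto
    qed
    finally have badsum: "(\<Sum>b\<in>V. real (badb b)) \<le> \<beta> * m ^ 3"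
      by (simp add: power2_eq_square power3_eq_cube mult_ac)
    have "(\<Sum>b\<in>V. (real (card (Nb b)))\<^sup>2 - 8 * real (badb b)) \<ge> m * (\<alpha>\<^sup>2 * m\<^sup>2 / 2)"
    proof -
      have "(\<Sum>b\<in>V. (real (card (Nb b)))\<^sup>2 - 8 * real (badb b))
          = (\<Sum>b\<in>V. (real (card (Nb b)))\<^sup>2) - 8 * (\<Sum>b\<in>V. real (badb b))"
        by (simp add: sum_subtractf sum_distrib_left)
      also have "\<dots> \<ge> \<alpha>\<^sup>2 * m ^ 3 - 8 * (\<beta> * m ^ 3)" using sq badsum by linarith
      finally show ?thesis by (simp add: \<beta>_def power2_eq_square power3_eq_cube field_simps)
    qed
    then obtain b where bV: "b \<in> V" and bgood: "(real (card (Nb b)))\<^sup>2 - 8 * real (badb b) \<ge> \<alpha>\<^sup>2 * m\<^sup>2 / 2"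
      using exists_ge_avg[OF fin Vne, of "\<alpha>\<^sup>2 * m\<^sup>2 / 2" "\<lambda>b. (real (card (Nb b)))\<^sup>2 - 8 * real (badb b)"]
      by (auto simp: m_def)
    define S where "S = Nb b"
    define s where "s = real (card S)"
    have finS: "finite S" by (simp add: S_def finNb)
    have SV: "S \<subseteq> V" by (auto simp: S_def Nb_def)
    have "(\<alpha> * m / 2)\<^sup>2 = \<alpha>\<^sup>2 * m\<^sup>2 / 4" by (simp add: power_mult_distrib power_divide)
    moreover have "\<alpha>\<^sup>2 * m\<^sup>2 \<ge> 0" by simp
    moreover have "real (badb b) \<ge> 0" by simp
    ultimately have "(\<alpha> * m / 2)\<^sup>2 \<le> s\<^sup>2" using bgood unfolding s_def S_def by linarith
    then have sge: "\<alpha> * m / 2 \<le> s" by (rule power2_le_imp_le) (simp add: s_def)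
    have spos: "s > 0" using sge alpha mpos by (smt (verit) divide_pos_pos mult_pos_pos)
    have bads: "8 * real (badb b) \<le> s\<^sup>2"
      using bgood alpha mpos by (simp add: s_def S_def) (smt (verit) zero_le_power2 mult_nonneg_nonneg)
    define badc where "badc a = card {a' \<in> S. (a,a') \<in> Bad}" for a
    have badb_sum: "real (badb b) = (\<Sum>a\<in>S. real (badc a))"
    proof -
      have "Bad \<inter> (Nb b \<times> Nb b) = (SIGMA a:S. {a' \<in> S. (a,a') \<in> Bad})" by (auto simp: S_def Bad_def)
      then have "badb b = (\<Sum>a\<in>S. badc a)" using finS by (simp add: badb_def badc_def)
      then show ?thesis by simp
    qed
    define V' where "V' = {a \<in> S. real (badc a) \<le> s / 4}"
    have "real (card (S - V')) * (s / 4) \<le> (\<Sum>a\<in>S - V'. real (badc a))"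
    proof -
      have "(\<Sum>a\<in>S - V'. s / 4) \<le> (\<Sum>a\<in>S - V'. real (badc a))"
        by (intro sum_mono) (auto simp: V'_def)
      then show ?thesis by simp
    qed
    also have "\<dots> \<le> (\<Sum>a\<in>S. real (badc a))" using finS by (intro sum_mono2) auto
    also have "\<dots> \<le> s\<^sup>2 / 8" using bads badb_sum by simp
    finally have "real (card (S - V')) * (s / 4) \<le> s\<^sup>2 / 8" .
    then have "real (card (S - V')) \<le> s / 2" using spos by (simp add: power2_eq_square field_simps)
    moreover have "card S = card V' + card (S - V')"
      using finS by (metis (no_types, lifting) V'_def card_Diff_subset finite_subset mem_Collect_eq subsetI
               add.commute card_mono le_add_diff_inverse2)
    ultimately have V'big: "real (card V') \<ge> s / 2" by (simp add: s_def)
    show ?thesis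
    proof (intro exI[of _ V'] conjI ballI)
      show "V' \<subseteq> V" using SV by (auto simp: V'_def)
      show "\<alpha> * real (card V) / 4 \<le> real (card V')" using V'big sge by (simp add: m_def)
      fix a a' assume a: "a \<in> V'" and a': "a' \<in> V'"
      define Ba where "Ba = {a1 \<in> S. (a,a1) \<in> Bad}"
      define Ba' where "Ba' = {a1 \<in> S. (a',a1) \<in> Bad}"
      have "S - Ba - Ba' \<subseteq> {a1 \<in> V. real (codeg G V a a1) \<ge> \<alpha>\<^sup>2 / 16 * real (card V)
                                       \<and> real (codeg G V a' a1) \<ge> \<alpha>\<^sup>2 / 16 * real (card V)}"
        using a a' SV by (auto simp: Ba_def Ba'_def Bad_def V'_def \<beta>_def m_def not_less)
      then have c1: "real (card (S - Ba - Ba')) \<le> real (card {a1 \<in> V. real (codeg G V a a1) \<ge> \<alpha>\<^sup>2 / 16 * real (card V)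
                                       \<and> real (codeg G V a' a1) \<ge> \<alpha>\<^sup>2 / 16 * real (card V)})"
        using fin by (intro of_nat_mono card_mono) auto
      have "card S \<le> card (S - Ba - Ba') + card (Ba \<inter> S) + card (Ba' \<inter> S)"
        using finS by (rule card_diff2_ge)
      moreover have "Ba \<inter> S = Ba" "Ba' \<inter> S = Ba'" by (auto simp: Ba_def Ba'_def)
      ultimately have c2: "real (card S) \<le> real (card (S - Ba - Ba')) + real (card Ba) + real (card Ba')"
        by (metis of_nat_add of_nat_mono)
      have "real (card Ba) \<le> s / 4" "real (card Ba') \<le> s / 4"
        using a a' by (auto simp: V'_def Ba_def Ba'_def badc_def)
      then have "s / 2 \<le> real (card {a1 \<in> V. real (codeg G V a a1) \<ge> \<alpha>\<^sup>2 / 16 * real (card V)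
                                       \<and> real (codeg G V a' a1) \<ge> \<alpha>\<^sup>2 / 16 * real (card V)})"
        using c1 c2 unfolding s_def by linarith
      then show "\<alpha> * real (card V) / 4 \<le> real (card {a1 \<in> V. real (codeg G V a a1) \<ge> \<alpha>\<^sup>2 / 16 * real (card V)
                                       \<and> real (codeg G V a' a1) \<ge> \<alpha>\<^sup>2 / 16 * real (card V)})"
        using sge by (simp add: m_def)
    qed
  qed
qed

lemma card_sigma_lower:
  fixes R :: "'a \<Rightarrow> 'b set"
  assumes "finite D" "\<And>d. d \<in> D \<Longrightarrow> finite (R d)" "\<And>d. d \<in> D \<Longrightarrow> real (card (R d)) \<ge> L"
  shows "real (card (SIGMA d:D. R d)) \<ge> real (card D) * L"
proof -
  have "real (card (SIGMA d:D. R d)) = (\<Sum>d\<in>D. real (card (R d)))" using assms by simp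
  also have "\<dots> \<ge> (\<Sum>d\<in>D. L)" using assms by (intro sum_mono) auto
  finally show ?thesis by simp
qed

lemma bsg:
  fixes V :: "int set" and \<eta> :: real
  assumes fin: "finite V" and Vne: "V \<noteq> {}" and eta: "\<eta> > 0"
    and E: "real (card (qset V)) \<ge> \<eta> * real (card V) ^ 3"
  shows "\<exists>V' \<subseteq> V. real (card V') \<ge> \<eta> * real (card V) / 8 \<and>
           real (card {a - a' | a a'. a \<in> V' \<and> a' \<in> V'}) \<le> 2^19 / \<eta>^9 * real (card V)"
proof -
  define m where "m = real (card V)"
  have mpos: "m > 0" using fin Vne by (simp add: m_def card_gt_0_iff)
  define P where "P = {p \<in> (\<lambda>(a,b). a - b) ` (V \<times> V). real (card (rset V p)) \<ge> \<eta> * real (card V) / 2}"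
  define G where "G = {(a,b) \<in> V \<times> V. a - b \<in> P}"
  have Gbig: "real (card G) \<ge> \<eta> * m ^ 2 / 2"
    using edges_large[OF fin eta E P_def G_def] by (simp add: m_def)
  have Psmall: "real (card P) \<le> 2 * m / \<eta>" and finP: "finite P"
    using P_small[OF fin eta Vne P_def] by (auto simp: m_def)
  define \<alpha> where "\<alpha> = \<eta> / 2"
  define \<beta> where "\<beta> = \<alpha>\<^sup>2 / 16"
  have alpha: "\<alpha> > 0" using eta by (simp add: \<alpha>_def)
  have beta: "\<beta> > 0" using alpha by (simp add: \<beta>_def)
  have GV: "G \<subseteq> V \<times> V" by (auto simp: G_def)
  obtain V' where V'V: "V' \<subseteq> V" and V'big: "real (card V') \<ge> \<alpha> * m / 4"
    and paths: "\<And>a a'. a \<in> V' \<Longrightarrow> a' \<in> V' \<Longrightarrow>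
        real (card {a1 \<in> V. real (codeg G V a a1) \<ge> \<beta> * m \<and> real (codeg G V a' a1) \<ge> \<beta> * m}) \<ge> \<alpha> * m / 4"
    using graph_paths[OF fin GV alpha] Gbig unfolding \<alpha>_def \<beta>_def m_def by (auto simp: field_simps)
  define Good where "Good a a' = {a1 \<in> V. real (codeg G V a a1) \<ge> \<beta> * m \<and> real (codeg G V a' a1) \<ge> \<beta> * m}" for a a'
  define Cb where "Cb u v = {b \<in> V. (u,b) \<in> G \<and> (v,b) \<in> G}" for u v
  define T where "T a a' = (SIGMA a1:Good a a'. Cb a a1 \<times> Cb a' a1)" for a a'
  define \<phi> where "\<phi> a a' = (\<lambda>(a1::int, b1::int, b2::int). (a - b1, a1 - b1, a1 - b2, a' - b2))" for a a' :: int
  define L where "L = \<alpha> * m / 4 * (\<beta> * m)\<^sup>2"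
  have finCb: "finite (Cb u v)" for u v using fin by (simp add: Cb_def)
  have finGood: "finite (Good a a')" for a a' using fin by (simp add: Good_def)
  have Tbig: "real (card (T a a')) \<ge> L" if a: "a \<in> V'" and a': "a' \<in> V'" for a a'
  proof -
    have "real (card (T a a')) = (\<Sum>a1\<in>Good a a'. real (card (Cb a a1)) * real (card (Cb a' a1)))"
      using finGood finCb by (simp add: T_def card_cartesian_product)
    also have "\<dots> \<ge> (\<Sum>a1\<in>Good a a'. (\<beta> * m) * (\<beta> * m))"
    proof (intro sum_mono mult_mono)
      fix a1 assume "a1 \<in> Good a a'"
      then show "\<beta> * m \<le> real (card (Cb a a1))" "\<beta> * m \<le> real (card (Cb a' a1))"
        by (auto simp: Good_def Cb_def codeg_def)
    qed (use beta mpos in auto)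
    finally have "real (card (T a a')) \<ge> real (card (Good a a')) * (\<beta> * m)\<^sup>2"
      by (simp add: power2_eq_square)
    moreover have "real (card (Good a a')) \<ge> \<alpha> * m / 4" using paths[OF a a'] by (simp add: Good_def)
    ultimately show ?thesis unfolding L_def
      by (smt (verit) mult_right_mono zero_le_power2)
  qed
  have phi_inj: "inj_on (\<phi> a a') (T a a')" for a a'
    by (auto simp: inj_on_def \<phi>_def)
  have phi_img: "\<phi> a a' ` T a a' \<subseteq> {q \<in> P \<times> P \<times> P \<times> P. (case q of (p1,p2,p3,p4) \<Rightarrow> p1 - p2 + p3 - p4) = a - a'}" for a a'
    by (auto simp: \<phi>_def T_def Cb_def G_def)
  define D' where "D' = {a - a' | a a'. a \<in> V' \<and> a' \<in> V'}"
  have "\<forall>d\<in>D'. \<exists>pr. pr \<in> V' \<times> V' \<and> fst pr - snd pr = d" by (auto simp: D'_def)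
  then obtain pr where pr: "\<And>d. d \<in> D' \<Longrightarrow> pr d \<in> V' \<times> V' \<and> fst (pr d) - snd (pr d) = d" by metis
  define R where "R d = \<phi> (fst (pr d)) (snd (pr d)) ` T (fst (pr d)) (snd (pr d))" for d
  have finT: "finite (T a a')" for a a' using finGood finCb by (simp add: T_def)
  have finD': "finite D'"
  proof -
    have "D' = (\<lambda>(a,a'). a - a') ` (V' \<times> V')" by (auto simp: D'_def)
    moreover have "finite V'" using V'V fin finite_subset by auto
    ultimately show ?thesis by simp
  qed
  have "real (card (SIGMA d:D'. R d)) \<ge> real (card D') * L"
  proof (rule card_sigma_lower[OF finD'])
    fix d assume d: "d \<in> D'"
    show "finite (R d)" using finT by (simp add: R_def)
    have "card (R d) = card (T (fst (pr d)) (snd (pr d)))"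
      unfolding R_def by (rule card_image[OF phi_inj])
    then show "real (card (R d)) \<ge> L" using Tbig pr[OF d] by auto
  qed
  also have "card (SIGMA d:D'. R d) \<le> card (P \<times> P \<times> P \<times> P)"
  proof (rule card_inj_on_le[where f=snd])
    show "inj_on snd (SIGMA d:D'. R d)"
    proof (rule inj_onI)
      fix x y assume x: "x \<in> (SIGMA d:D'. R d)" and y: "y \<in> (SIGMA d:D'. R d)" and eq: "snd x = snd y"
      have key: "(case snd z of (p1,p2,p3,p4) \<Rightarrow> p1 - p2 + p3 - p4) = fst z" if z: "z \<in> (SIGMA d:D'. R d)" for z
      proof -
        obtain d q where zq: "z = (d,q)" "d \<in> D'" "q \<in> R d" using z by auto
        then have "q \<in> \<phi> (fst (pr d)) (snd (pr d)) ` T (fst (pr d)) (snd (pr d))" by (simp add: R_def)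
        then have "(case q of (p1,p2,p3,p4) \<Rightarrow> p1 - p2 + p3 - p4) = fst (pr d) - snd (pr d)"
          using phi_img by blast
        then show ?thesis using pr[OF zq(2)] zq(1) by simp
      qed
      show "x = y" using key[OF x] key[OF y] eq by (metis prod.collapse)
    qed
    show "snd ` (SIGMA d:D'. R d) \<subseteq> P \<times> P \<times> P \<times> P"
    proof
      fix q assume "q \<in> snd ` (SIGMA d:D'. R d)"
      then obtain d where "d \<in> D'" "q \<in> R d" by auto
      then show "q \<in> P \<times> P \<times> P \<times> P" using phi_img unfolding R_def by blast
    qed
    show "finite (P \<times> P \<times> P \<times> P)" using finP by simp
  qed
  then have "real (card (SIGMA d:D'. R d)) \<le> real (card P) ^ 4"
    by (simp add: card_cartesian_product power4_eq_xxxx flip: of_nat_mult)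
  also have "\<dots> \<le> (2 * m / \<eta>) ^ 4" using Psmall by (intro power_mono) auto
  finally have main: "real (card D') * L \<le> (2 * m / \<eta>) ^ 4" .
  have Lval: "L = \<eta>^5 * m^3 / 32768" by (simp add: L_def \<alpha>_def \<beta>_def power2_eq_square field_simps power_def numeral_eq_Suc)
  have Lpos: "L > 0" unfolding Lval using eta mpos by simp
  have "real (card D') \<le> (2 * m / \<eta>) ^ 4 / L" using main Lpos by (simp add: pos_le_divide_eq)
  also have "(2 * m / \<eta>) ^ 4 / L = 2^19 / \<eta>^9 * m"
    using eta mpos unfolding Lval by (simp add: field_simps power_divide power_mult_distrib) (simp add: power_def numeral_eq_Suc)
  finally have D'small: "real (card D') \<le> 2^19 / \<eta>^9 * m" .
  show ?thesis
  proof (intro exI[of _ V'] conjI)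
    show "V' \<subseteq> V" by (rule V'V)
    show "\<eta> * real (card V) / 8 \<le> real (card V')" using V'big by (simp add: \<alpha>_def m_def)
    show "real (card {a - a' | a a'. a \<in> V' \<and> a' \<in> V'}) \<le> 2^19 / \<eta>^9 * real (card V)"
      using D'small by (simp add: D'_def m_def)
  qed
qed

definition Uset :: "int set \<Rightarrow> real \<Rightarrow> nat \<Rightarrow> real set" where
  "Uset D \<delta> R = (\<Union>d\<in>D. \<Union>k\<in>{-(int R * \<bar>d\<bar> + 1)..int R * \<bar>d\<bar> + 1}.
      ball (real_of_int k / real_of_int d) (\<delta> / real_of_int \<bar>d\<bar>))"

lemma Uset_sets: "Uset D \<delta> R \<in> sets lborel"
proof -
  have "open (Uset D \<delta> R)" unfolding Uset_def by (intro open_UN ballI open_ball)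
  then show ?thesis by simp
qed

lemma emeasure_ball_real: "r \<ge> 0 \<Longrightarrow> emeasure lborel (ball (c::real) r) = ennreal (2 * r)"
  by (simp add: ball_eq_greaterThanLessThan)

lemma Uset_emeasure:
  assumes fin: "finite D" and nz: "0 \<notin> D" and dpos: "\<delta> \<ge> 0"
  shows "emeasure lborel (Uset D \<delta> R) \<le> ennreal (real (card D) * (4 * real R + 6) * \<delta>)"
proof -
  define K where "K d = {-(int R * \<bar>d\<bar> + 1)..int R * \<bar>d\<bar> + 1}" for d :: int
  define B where "B d = (\<Union>k\<in>K d. ball (real_of_int k / real_of_int d) (\<delta> / real_of_int \<bar>d\<bar>))" for d
  have Bsets: "B d \<in> sets lborel" for d
  proof -
    have "open (B d)" unfolding B_def by (intro open_UN ballI open_ball)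
    then show ?thesis by simp
  qed
  have Ble: "emeasure lborel (B d) \<le> ennreal ((4 * real R + 6) * \<delta>)" if d: "d \<in> D" for d
  proof -
    have dnz: "d \<noteq> 0" using d nz by auto
    then have dabs: "real_of_int \<bar>d\<bar> \<ge> 1" by linarith
    have r0: "\<delta> / real_of_int \<bar>d\<bar> \<ge> 0" using dpos by simp
    have "emeasure lborel (B d) \<le> (\<Sum>k\<in>K d. emeasure lborel (ball (real_of_int k / real_of_int d) (\<delta> / real_of_int \<bar>d\<bar>)))"
      unfolding B_def by (rule emeasure_subadditive_finite) (auto simp: K_def)
    also have "\<dots> = (\<Sum>k\<in>K d. ennreal (2 * (\<delta> / real_of_int \<bar>d\<bar>)))"
      using r0 by (simp add: emeasure_ball_real)
    also have "\<dots> = ennreal (real (card (K d)) * (2 * (\<delta> / real_of_int \<bar>d\<bar>)))"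
      using r0 by (subst sum_ennreal) auto
    also have "real (card (K d)) = 2 * real R * real_of_int \<bar>d\<bar> + 3"
    proof -
      have "card (K d) = nat (2 * (int R * \<bar>d\<bar>) + 3)" by (simp add: K_def algebra_simps)
      also have "real \<dots> = 2 * real R * real_of_int \<bar>d\<bar> + 3" by simp
      finally show ?thesis .
    qed
    also have "(2 * real R * real_of_int \<bar>d\<bar> + 3) * (2 * (\<delta> / real_of_int \<bar>d\<bar>))
        = 4 * real R * \<delta> + 6 * \<delta> / real_of_int \<bar>d\<bar>"
      using dabs by (simp add: field_simps)
    also have "\<dots> \<le> (4 * real R + 6) * \<delta>"
    proof -
      have "6 * \<delta> / real_of_int \<bar>d\<bar> \<le> 6 * \<delta>" using dabs dpos by (simp add: divide_le_eq mult_le_cancel_left)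
        (smt (verit) mult_le_cancel_left1)
      then show ?thesis by (simp add: algebra_simps)
    qed
    finally show ?thesis by (simp add: ennreal_leI)
  qed
  have "emeasure lborel (Uset D \<delta> R) = emeasure lborel (\<Union>d\<in>D. B d)"
    by (simp add: Uset_def B_def K_def)
  also have "\<dots> \<le> (\<Sum>d\<in>D. emeasure lborel (B d))"
    using fin Bsets by (intro emeasure_subadditive_finite) auto
  also have "\<dots> \<le> (\<Sum>d\<in>D. ennreal ((4 * real R + 6) * \<delta>))"
    by (intro sum_mono Ble)
  also have "\<dots> = ennreal (real (card D) * (4 * real R + 6) * \<delta>)"
    using dpos by (subst sum_ennreal) (auto simp: mult.assoc)
  finally show ?thesis .
qed

lemma Uset_measure:
  assumes fin: "finite D" and nz: "0 \<notin> D" and dpos: "\<delta> \<ge> 0"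
  shows "measure lborel (Uset D \<delta> R) \<le> real (card D) * (4 * real R + 6) * \<delta>"
  unfolding measure_def
  by (rule enn2real_leI) (use Uset_emeasure[OF assms] dpos in auto)

lemma Uset_finite_emeasure:
  assumes fin: "finite D" and nz: "0 \<notin> D" and dpos: "\<delta> \<ge> 0"
  shows "emeasure lborel (Uset D \<delta> R) < \<infinity>"
  using Uset_emeasure[OF assms, of R] by (simp add: le_less_trans)

lemma dist_nearest_int_lt:
  assumes "dist_nearest_int y < \<delta>"
  shows "\<exists>k::int. \<bar>y - real_of_int k\<bar> < \<delta>"
proof -
  have "bdd_below ((\<lambda>k::int. \<bar>y - real_of_int k\<bar>) ` UNIV)" by (intro bdd_belowI[of _ 0]) auto
  then show ?thesis using assms unfolding dist_nearest_int_def by (simp add: cINF_less_iff)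
qed

lemma Uset_cover:
  assumes d: "d \<in> D" and nz: "d \<noteq> 0" and al: "\<bar>\<alpha>\<bar> \<le> real R" and dl: "\<delta> \<le> 1"
    and lt: "dist_nearest_int (\<alpha> * real_of_int d) < \<delta>"
  shows "\<alpha> \<in> Uset D \<delta> R"
proof -
  obtain k :: int where k: "\<bar>\<alpha> * real_of_int d - real_of_int k\<bar> < \<delta>" using dist_nearest_int_lt[OF lt] by blast
  have dabs: "real_of_int \<bar>d\<bar> \<ge> 1" using nz by linarith
  have "\<bar>real_of_int k\<bar> < \<bar>\<alpha> * real_of_int d\<bar> + 1" using k dl by linarith
  also have "\<bar>\<alpha> * real_of_int d\<bar> \<le> real R * real_of_int \<bar>d\<bar>"
    using al by (simp add: abs_mult mult_right_mono)
  finally have "\<bar>real_of_int k\<bar> < real_of_int (int R * \<bar>d\<bar> + 1)" by simp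
  then have "\<bar>k\<bar> < int R * \<bar>d\<bar> + 1" by linarith
  then have kK: "k \<in> {-(int R * \<bar>d\<bar> + 1)..int R * \<bar>d\<bar> + 1}" by auto
  have "dist \<alpha> (real_of_int k / real_of_int d) = \<bar>\<alpha> * real_of_int d - real_of_int k\<bar> / real_of_int \<bar>d\<bar>"
  proof -
    have "\<alpha> - real_of_int k / real_of_int d = (\<alpha> * real_of_int d - real_of_int k) / real_of_int d"
      using nz by (simp add: field_simps)
    then show ?thesis by (simp add: dist_real_def abs_divide)
  qed
  also have "\<dots> < \<delta> / real_of_int \<bar>d\<bar>" using k dabs by (simp add: divide_strict_right_mono)
  finally have "\<alpha> \<in> ball (real_of_int k / real_of_int d) (\<delta> / real_of_int \<bar>d\<bar>)" by (simp add: dist_commute)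
  then show ?thesis unfolding Uset_def using d kK by blast
qed

lemma bsg_idx:
  fixes x :: "nat \<Rightarrow> nat" and r :: real
  assumes incr: "strict_mono_on {1..} x" and r_pos: "r > 0"
    and energy: "\<forall>N. real (add_energy x N) \<ge> r * real N ^ 3" and M: "M \<ge> 1"
  shows "\<exists>A \<subseteq> {1..M}. real (card A) \<ge> r * real M / 8 \<and>
           real (card {int (x i) - int (x j) | i j. i \<in> A \<and> j \<in> A}) \<le> 2^19 / r^9 * real M"
proof -
  have injx: "inj_on x {1..M}"
    using strict_mono_on_imp_inj_on[OF incr] by (rule inj_on_subset) auto
  define V where "V = (\<lambda>i. int (x i)) ` {1..M}"
  have injV: "inj_on (\<lambda>i. int (x i)) {1..M}"
  proof (rule inj_onI)
    fix i j assume "i \<in> {1..M}" "j \<in> {1..M}" "int (x i) = int (x j)"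
    then show "i = j" using injx by (simp add: inj_on_eq_iff)
  qed
  have cardV: "card V = M" unfolding V_def using card_image[OF injV] by simp
  have finV: "finite V" by (simp add: V_def)
  have Vne: "V \<noteq> {}" using M by (auto simp: V_def)
  define Qi where "Qi = {(a, b, c, d). a \<in> {1..M} \<and> b \<in> {1..M} \<and> c \<in> {1..M} \<and> d \<in> {1..M} \<and> x a + x b = x c + x d}"
  define h where "h = (\<lambda>(a::nat, b::nat, c::nat, d::nat). (int (x a), int (x b), int (x c), int (x d)))"
  have Vmem: "int (x i) \<in> V" if "i \<in> {1..M}" for i using that by (simp add: V_def)
  have Vinv: "\<exists>i\<in>{1..M}. p = int (x i)" if "p \<in> V" for p using that by (auto simp: V_def)
  have "h ` Qi = qset V"
  proof
    show "h ` Qi \<subseteq> qset V"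
    proof
      fix q assume "q \<in> h ` Qi"
      then obtain a b c d where q: "q = h (a,b,c,d)" and abcd: "(a,b,c,d) \<in> Qi" by auto
      from abcd have ra: "a \<in> {1..M}" "b \<in> {1..M}" "c \<in> {1..M}" "d \<in> {1..M}"
        and eq: "x a + x b = x c + x d" by (auto simp: Qi_def)
      have "int (x a) + int (x b) = int (x c) + int (x d)" using eq by (metis of_nat_add)
      then show "q \<in> qset V" using q Vmem[OF ra(1)] Vmem[OF ra(2)] Vmem[OF ra(3)] Vmem[OF ra(4)]
        by (simp add: h_def qset_def)
    qed
    show "qset V \<subseteq> h ` Qi"
    proof
      fix q assume qq: "q \<in> qset V"
      obtain p1 p2 p3 p4 where q: "q = (p1,p2,p3,p4)" by (cases q) auto
      have pV: "p1 \<in> V" "p2 \<in> V" "p3 \<in> V" "p4 \<in> V" and peq: "p1 + p2 = p3 + p4"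
        using qq q by (auto simp: qset_def)
      obtain a where a: "a \<in> {1..M}" "p1 = int (x a)" using Vinv[OF pV(1)] by blast
      obtain b where b: "b \<in> {1..M}" "p2 = int (x b)" using Vinv[OF pV(2)] by blast
      obtain c where c: "c \<in> {1..M}" "p3 = int (x c)" using Vinv[OF pV(3)] by blast
      obtain d where d: "d \<in> {1..M}" "p4 = int (x d)" using Vinv[OF pV(4)] by blast
      have "x a + x b = x c + x d" using peq a b c d by linarith
      then have "(a,b,c,d) \<in> Qi" using a b c d by (simp add: Qi_def)
      moreover have "q = h (a,b,c,d)" using q a b c d by (simp add: h_def)
      ultimately show "q \<in> h ` Qi" by blast
    qed
  qed
  moreover have "inj_on h Qi"
  proof (rule inj_onI)
    fix p q assume p: "p \<in> Qi" and q: "q \<in> Qi" and eq: "h p = h q"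
    obtain a b c d where pp: "p = (a,b,c,d)" by (cases p) auto
    obtain a' b' c' d' where qq: "q = (a',b',c',d')" by (cases q) auto
    have "x a = x a'" "x b = x b'" "x c = x c'" "x d = x d'" using eq pp qq by (auto simp: h_def)
    moreover have "a \<in> {1..M}" "b \<in> {1..M}" "c \<in> {1..M}" "d \<in> {1..M}" using p pp by (auto simp: Qi_def)
    moreover have "a' \<in> {1..M}" "b' \<in> {1..M}" "c' \<in> {1..M}" "d' \<in> {1..M}" using q qq by (auto simp: Qi_def)
    ultimately have "a = a'" "b = b'" "c = c'" "d = d'" using injx by (meson inj_onD)+
    then show "p = q" using pp qq by simp
  qed
  ultimately have "card (qset V) = card Qi" by (metis card_image)
  also have "card Qi = add_energy x M" by (simp add: Qi_def add_energy_def)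
  finally have E: "real (card (qset V)) \<ge> r * real (card V) ^ 3" using energy cardV by simp
  obtain V' where V'V: "V' \<subseteq> V" and V'big: "real (card V') \<ge> r * real (card V) / 8"
    and V'd: "real (card {a - a' | a a'. a \<in> V' \<and> a' \<in> V'}) \<le> 2^19 / r^9 * real (card V)"
    using bsg[OF finV Vne r_pos E] by blast
  define A where "A = {i \<in> {1..M}. int (x i) \<in> V'}"
  have "(\<lambda>i. int (x i)) ` A = V'" using V'V by (auto simp: A_def V_def)
  moreover have "inj_on (\<lambda>i. int (x i)) A" using injV by (rule inj_on_subset) (auto simp: A_def)
  ultimately have cA: "card A = card V'" by (metis card_image)
  have "{int (x i) - int (x j) | i j. i \<in> A \<and> j \<in> A} = {a - a' | a a'. a \<in> V' \<and> a' \<in> V'}"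
  proof (intro equalityI subsetI)
    fix z assume "z \<in> {int (x i) - int (x j) | i j. i \<in> A \<and> j \<in> A}"
    then show "z \<in> {a - a' | a a'. a \<in> V' \<and> a' \<in> V'}" by (auto simp: A_def)
  next
    fix z assume "z \<in> {a - a' | a a'. a \<in> V' \<and> a' \<in> V'}"
    then obtain a a' where z: "z = a - a'" "a \<in> V'" "a' \<in> V'" by blast
    then obtain i j where "a = int (x i)" "a' = int (x j)" "i \<in> A" "j \<in> A"
      using \<open>(\<lambda>i. int (x i)) ` A = V'\<close> by (metis imageE)
    then show "z \<in> {int (x i) - int (x j) | i j. i \<in> A \<and> j \<in> A}" using z by blast
  qed
  moreover have "A \<subseteq> {1..M}" by (auto simp: A_def)
  ultimately show ?thesis using cA V'big V'd cardV by (intro exI[of _ A]) simp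
qed

definition bseq :: "real \<Rightarrow> nat \<Rightarrow> nat" where
  "bseq K' = rec_nat 0 (\<lambda>N bN. nat \<lceil>exp (real (Suc N)^2 * K' * (1 + real bN))\<rceil>)"

lemma bseq_0 [simp]: "bseq K' 0 = 0" by (simp add: bseq_def)
lemma bseq_Suc: "bseq K' (Suc N) = nat \<lceil>exp (real (Suc N)^2 * K' * (1 + real (bseq K' N)))\<rceil>"
  by (simp add: bseq_def)

lemma bseq_props:
  assumes K': "K' \<ge> 2"
  shows "real (bseq K' (Suc N)) \<ge> exp (real (Suc N)^2 * K' * (1 + real (bseq K' N)))"
    and "real (Suc N)^2 * K' * (1 + real (bseq K' N)) \<ge> K' * (1 + real (bseq K' N))"
    and "bseq K' N < bseq K' (Suc N)"
    and "ln (real (bseq K' (Suc N))) \<ge> real (Suc N)^2 * K' * (1 + real (bseq K' N))"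
    and "real (bseq K' (Suc N)) \<ge> 3"
    and "real (bseq K' (Suc N)) \<ge> K' * (1 + real (bseq K' N))"
proof -
  define y where "y = real (Suc N)^2 * K' * (1 + real (bseq K' N))"
  have b: "real (bseq K' (Suc N)) = real (nat \<lceil>exp y\<rceil>)" by (simp add: bseq_Suc y_def)
  have "real (nat \<lceil>exp y\<rceil>) \<ge> exp y" by linarith
  then show 1: "real (bseq K' (Suc N)) \<ge> exp (real (Suc N)^2 * K' * (1 + real (bseq K' N)))"
    using b by (simp add: y_def)
  have "real (Suc N)^2 \<ge> 1" by simp
  moreover have "K' * (1 + real (bseq K' N)) \<ge> 0" using K' by simp
  ultimately have "real (Suc N)^2 * (K' * (1 + real (bseq K' N))) \<ge> 1 * (K' * (1 + real (bseq K' N)))"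
    by (intro mult_right_mono) auto
  then show 2: "real (Suc N)^2 * K' * (1 + real (bseq K' N)) \<ge> K' * (1 + real (bseq K' N))"
    by (simp add: mult.assoc)
  have ey: "exp y \<ge> 1 + y" by simp
  have b0nn: "real (bseq K' N) \<ge> 0" by simp
  have 1: "real (bseq K' (Suc N)) \<ge> exp y" using b \<open>real (nat \<lceil>exp y\<rceil>) \<ge> exp y\<close> by simp
  have yK: "y \<ge> K' * (1 + real (bseq K' N))" using 2 by (simp add: y_def)
  have "K' * (1 + real (bseq K' N)) \<ge> 2 * (1 + real (bseq K' N))" using K' by (intro mult_right_mono) auto
  then have y2: "y \<ge> 2 * (1 + real (bseq K' N))" using yK by linarith
  show 6: "real (bseq K' (Suc N)) \<ge> K' * (1 + real (bseq K' N))" using 1 ey yK by linarith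
  have "real (bseq K' N) < real (bseq K' (Suc N))" using 1 ey y2 b0nn by (smt (verit))
  then show "bseq K' N < bseq K' (Suc N)" by simp
  show "real (bseq K' (Suc N)) \<ge> 3" using 1 ey y2 b0nn by (smt (verit))
  have pos: "real (bseq K' (Suc N)) > 0" using 1 exp_gt_zero[of y] by linarith
  have "ln (real (bseq K' (Suc N))) \<ge> y" using 1 pos by (simp add: ln_ge_iff)
  then show "ln (real (bseq K' (Suc N))) \<ge> real (Suc N)^2 * K' * (1 + real (bseq K' N))"
    by (simp add: y_def)
qed

lemma bseq_mono: "K' \<ge> 2 \<Longrightarrow> strict_mono (bseq K')"
  using bseq_props(3) by (simp add: strict_mono_Suc_iff)

definition Sset :: "(nat \<Rightarrow> nat) \<Rightarrow> (nat \<Rightarrow> nat set) \<Rightarrow> nat set" where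
  "Sset b Af = {i. \<exists>N. b N < i \<and> i \<le> b (Suc N) \<and> i \<in> Af (b (Suc N))}"

lemma Sset_pos: "i \<in> Sset b Af \<Longrightarrow> i \<ge> 1"
  by (auto simp: Sset_def)

lemma Sset_block:
  assumes sm: "strict_mono b" and i: "i \<in> Sset b Af" and le: "i \<le> b (Suc N)"
  shows "i \<le> b N \<or> i \<in> Af (b (Suc N))"
proof (rule ccontr)
  assume "\<not> ?thesis"
  then have gt: "b N < i" and nA: "i \<notin> Af (b (Suc N))" by auto
  obtain N' where N': "b N' < i" "i \<le> b (Suc N')" "i \<in> Af (b (Suc N'))" using i by (auto simp: Sset_def)
  have "N' = N"
  proof (rule ccontr)
    assume "N' \<noteq> N"
    then have "N' < N \<or> N < N'" by auto
    then show False
    proof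
      assume "N' < N" then have "Suc N' \<le> N" by simp
      then have "b (Suc N') \<le> b N" using sm by (simp add: strict_mono_less_eq)
      then show False using N' gt by linarith
    next
      assume "N < N'" then have "Suc N \<le> N'" by simp
      then have "b (Suc N) \<le> b N'" using sm by (simp add: strict_mono_less_eq)
      then show False using N' le by linarith
    qed
  qed
  then show False using N' nA by simp
qed

lemma Sset_contains:
  "Af (b (Suc N)) \<inter> {b N<..b (Suc N)} \<subseteq> Sset b Af \<inter> {..b (Suc N)}"
  by (auto simp: Sset_def)

lemma card_block_ge:
  assumes "A \<subseteq> {1..M}"
  shows "real (card (A \<inter> {L<..M})) \<ge> real (card A) - real L"
proof -
  have finA: "finite A" using assms finite_subset by blast
  have "A \<subseteq> (A \<inter> {L<..M}) \<union> {1..L}" using assms by auto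
  then have "card A \<le> card ((A \<inter> {L<..M}) \<union> {1..L})" by (intro card_mono) auto
  also have "\<dots> \<le> card (A \<inter> {L<..M}) + card {1..L}" by (rule card_Un_le)
  finally show ?thesis by simp
qed

lemma enum_count:
  fixes S :: "nat set"
  assumes inf: "infinite S"
  shows "card {k. 1 \<le> k \<and> enumerate S (k - 1) \<le> A} = card (S \<inter> {..A})"
proof -
  have "{k. 1 \<le> k \<and> enumerate S (k - 1) \<le> A} = Suc ` {i. enumerate S i \<le> A}"
  proof (intro equalityI subsetI)
    fix k assume "k \<in> {k. 1 \<le> k \<and> enumerate S (k - 1) \<le> A}"
    then show "k \<in> Suc ` {i. enumerate S i \<le> A}" by (intro image_eqI[where x="k - 1"]) auto
  qed auto
  then have "card {k. 1 \<le> k \<and> enumerate S (k - 1) \<le> A} = card {i. enumerate S i \<le> A}"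
    by (simp add: card_image)
  also have "\<dots> = card (enumerate S ` {i. enumerate S i \<le> A})"
  proof (rule card_image[symmetric])
    show "inj_on (enumerate S) {i. enumerate S i \<le> A}"
    proof -
      have "strict_mono (enumerate S)" by (rule strict_monoI) (use enumerate_mono inf in blast)
      then show ?thesis using strict_mono_imp_inj_on inj_on_subset by blast
    qed
  qed
  also have "enumerate S ` {i. enumerate S i \<le> A} = S \<inter> {..A}"
  proof (intro equalityI subsetI)
    fix s assume "s \<in> S \<inter> {..A}"
    then obtain i where "s = enumerate S i" using range_enumerate[OF inf] by blast
    then show "s \<in> enumerate S ` {i. enumerate S i \<le> A}" using \<open>s \<in> S \<inter> {..A}\<close> by auto
  qed (auto simp: enumerate_in_set inf)
  finally show ?thesis .
qed

lemma DD_card: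
  fixes x :: "nat \<Rightarrow> nat" and K :: real
  assumes sm: "strict_mono b"
    and Af_sub: "Af (b (Suc N)) \<subseteq> {1..b (Suc N)}"
    and Af_D: "real (card {int (x i) - int (x j) | i j. i \<in> Af (b (Suc N)) \<and> j \<in> Af (b (Suc N))}) \<le> K * real (b (Suc N))"
  shows "finite {int (x i) - int (x j) | i j. i \<in> Sset b Af \<and> j \<in> Sset b Af \<and> i \<le> b (Suc N) \<and> j \<le> b (Suc N) \<and> i \<noteq> j}"
    and "real (card {int (x i) - int (x j) | i j. i \<in> Sset b Af \<and> j \<in> Sset b Af \<and> i \<le> b (Suc N) \<and> j \<le> b (Suc N) \<and> i \<noteq> j})
          \<le> K * real (b (Suc N)) + 2 * real (b N) * real (b (Suc N))"
proof -
  define B where "B = b (Suc N)"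
  define A where "A = Af B"
  define f where "f = (\<lambda>(i,j). int (x i) - int (x j))"
  define DA where "DA = {int (x i) - int (x j) | i j. i \<in> A \<and> j \<in> A}"
  define Pr where "Pr = ({1..b N} \<times> {1..B}) \<union> ({1..B} \<times> {1..b N})"
  define DD where "DD = {int (x i) - int (x j) | i j. i \<in> Sset b Af \<and> j \<in> Sset b Af \<and> i \<le> B \<and> j \<le> B \<and> i \<noteq> j}"
  have finA: "finite A" using Af_sub finite_subset by (auto simp: A_def B_def)
  have DAeq: "DA = f ` (A \<times> A)" by (auto simp: DA_def f_def)
  have finDA: "finite DA" using finA by (simp add: DAeq)
  have sub: "DD \<subseteq> DA \<union> f ` Pr"
  proof
    fix z assume "z \<in> DD"
    then obtain i j where z: "z = int (x i) - int (x j)" and ij: "i \<in> Sset b Af" "j \<in> Sset b Af" "i \<le> B" "j \<le> B"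
      by (auto simp: DD_def)
    have i1: "i \<ge> 1" "j \<ge> 1" using ij Sset_pos by auto
    have ci: "i \<le> b N \<or> i \<in> A" using Sset_block[OF sm ij(1)] ij(3) by (auto simp: A_def B_def)
    have cj: "j \<le> b N \<or> j \<in> A" using Sset_block[OF sm ij(2)] ij(4) by (auto simp: A_def B_def)
    show "z \<in> DA \<union> f ` Pr"
    proof (cases "i \<in> A \<and> j \<in> A")
      case True then show ?thesis using z by (auto simp: DA_def)
    next
      case False
      then have "i \<le> b N \<or> j \<le> b N" using ci cj by auto
      then have "(i,j) \<in> Pr" using i1 ij by (auto simp: Pr_def)
      then show ?thesis using z by (auto simp: f_def)
    qed
  qed
  have finPr: "finite Pr" by (simp add: Pr_def)
  show "finite {int (x i) - int (x j) | i j. i \<in> Sset b Af \<and> j \<in> Sset b Af \<and> i \<le> b (Suc N) \<and> j \<le> b (Suc N) \<and> i \<noteq> j}"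
    using sub finDA finPr unfolding DD_def B_def by (meson finite_Un finite_imageI finite_subset)
  have "card DD \<le> card (DA \<union> f ` Pr)" using sub finDA finPr by (intro card_mono) auto
  also have "\<dots> \<le> card DA + card (f ` Pr)" by (rule card_Un_le)
  also have "card (f ` Pr) \<le> card Pr" using finPr by (rule card_image_le)
  also have "card Pr \<le> card ({1..b N} \<times> {1..B}) + card ({1..B} \<times> {1..b N})"
    unfolding Pr_def by (rule card_Un_le)
  also have "\<dots> = 2 * (b N * B)" by (simp add: card_cartesian_product)
  finally have "card DD \<le> card DA + 2 * (b N * B)" by simp
  have "real (card DD) \<le> real (card DA) + 2 * real (b N) * real B"
  proof -
    have "real (card DD) \<le> real (card DA + 2 * (b N * B))" using \<open>card DD \<le> card DA + 2 * (b N * B)\<close> by (simp only: of_nat_le_iff)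
    then show ?thesis by simp
  qed
  then show "real (card {int (x i) - int (x j) | i j. i \<in> Sset b Af \<and> j \<in> Sset b Af \<and> i \<le> b (Suc N) \<and> j \<le> b (Suc N) \<and> i \<noteq> j})
          \<le> K * real (b (Suc N)) + 2 * real (b N) * real (b (Suc N))"
    using Af_D \<open>real (card DD) \<le> real (card DA) + 2 * real (b N) * real B\<close> unfolding DD_def DA_def A_def B_def by linarith
qed

lemma delta_lower:
  fixes x :: "nat \<Rightarrow> nat" and S :: "nat set"
  assumes inf: "infinite S" and Spos: "\<And>i. i \<in> S \<Longrightarrow> i \<ge> 1"
    and injx: "inj_on x {1..}"
    and dpos: "\<delta> > 0" and d1: "\<delta> \<le> 1" and al: "\<bar>\<alpha>\<bar> \<le> real R"
    and notin: "\<alpha> \<notin> Uset {int (x i) - int (x j) | i j. i \<in> S \<and> j \<in> S \<and> i \<le> A \<and> j \<le> A \<and> i \<noteq> j} \<delta> R"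
    and two: "card (S \<inter> {..A}) \<ge> 2"
  shows "delta_min \<alpha> x (\<lambda>k. enumerate S (k - 1)) A \<ge> \<delta>"
proof -
  define n where "n = (\<lambda>k. enumerate S (k - 1))"
  define DD where "DD = {int (x i) - int (x j) | i j. i \<in> S \<and> j \<in> S \<and> i \<le> A \<and> j \<le> A \<and> i \<noteq> j}"
  define Pk where "Pk = {(k,l). 1 \<le> k \<and> 1 \<le> l \<and> k \<noteq> l \<and> n k \<le> A \<and> n l \<le> A}"
  define g where "g = (\<lambda>(k,l). dist_nearest_int (\<alpha> * real (x (n k)) - \<alpha> * real (x (n l))))"
  have Zeq: "{dist_nearest_int (\<alpha> * real (x (n k)) - \<alpha> * real (x (n l))) | k l.
                             1 \<le> k \<and> 1 \<le> l \<and> k \<noteq> l \<and> n k \<le> A \<and> n l \<le> A} = g ` Pk"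
    by (auto simp: g_def Pk_def)
  have nle: "k - 1 \<le> n k" for k using le_enumerate[OF inf] by (simp add: n_def)
  have "Pk \<subseteq> {..A+1} \<times> {..A+1}"
  proof
    fix p assume "p \<in> Pk"
    then obtain k l where p: "p = (k,l)" "n k \<le> A" "n l \<le> A" by (auto simp: Pk_def)
    then show "p \<in> {..A+1} \<times> {..A+1}" using nle[of k] nle[of l] by auto
  qed
  then have finPk: "finite Pk" by (rule finite_subset) auto
  have nmono: "k < l \<Longrightarrow> n k < n l" if "1 \<le> k" "1 \<le> l" for k l
    using that enumerate_mono[OF _ inf] by (simp add: n_def)
  have ninj: "n k \<noteq> n l" if "1 \<le> k" "1 \<le> l" "k \<noteq> l" for k l
    using nmono[OF that(1,2)] nmono[OF that(2,1)] that(3) by (cases "k < l") auto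
  have nS: "n k \<in> S" for k by (simp add: n_def enumerate_in_set inf)
  have "card {k. 1 \<le> k \<and> n k \<le> A} \<ge> 2" using enum_count[OF inf, of A] two by (simp add: n_def)
  then obtain k l where kl: "k \<in> {k. 1 \<le> k \<and> n k \<le> A}" "l \<in> {k. 1 \<le> k \<and> n k \<le> A}" "k \<noteq> l"
  proof -
    assume c2: "card {k. 1 \<le> k \<and> n k \<le> A} \<ge> 2"
      and th: "\<And>k l. k \<in> {k. 1 \<le> k \<and> n k \<le> A} \<Longrightarrow> l \<in> {k. 1 \<le> k \<and> n k \<le> A} \<Longrightarrow> k \<noteq> l \<Longrightarrow> thesis"
    define Q where "Q = {k. 1 \<le> k \<and> n k \<le> A}"
    have cQ: "card Q \<ge> 2" using c2 by (simp add: Q_def)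
    then have cQ0: "card Q > 0" by simp
    then have fq: "finite Q" by (rule card_ge_0_finite)
    have "Q \<noteq> {}" using cQ0 by auto
    then obtain k where k: "k \<in> Q" by auto
    have "card (Q - {k}) = card Q - 1" using k fq by simp
    then have "card (Q - {k}) > 0" using cQ by linarith
    then have "Q - {k} \<noteq> {}" by (metis card.empty less_irrefl)
    then obtain l where l: "l \<in> Q - {k}" by auto
    show thesis
    proof (rule th)
      show "k \<in> {k. 1 \<le> k \<and> n k \<le> A}" using k by (simp add: Q_def)
      show "l \<in> {k. 1 \<le> k \<and> n k \<le> A}" using l by (simp add: Q_def)
      show "k \<noteq> l" using l by simp
    qed
  qed
  then have "(k,l) \<in> Pk" by (auto simp: Pk_def)
  then have ne: "g ` Pk \<noteq> {}" by auto
  have each: "\<delta> \<le> z" if "z \<in> g ` Pk" for z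
  proof -
    obtain k l where kl: "(k,l) \<in> Pk" "z = g (k,l)" using \<open>z \<in> g ` Pk\<close> by auto
    define i where "i = n k"
    define j where "j = n l"
    have ij: "i \<in> S" "j \<in> S" "i \<le> A" "j \<le> A" "i \<noteq> j"
      using kl ninj nS by (auto simp: Pk_def i_def j_def)
    define d where "d = int (x i) - int (x j)"
    have dD: "d \<in> DD" using ij by (auto simp: DD_def d_def)
    have "x i \<noteq> x j" using injx ij Spos by (meson atLeast_iff inj_onD)
    then have dnz: "d \<noteq> 0" by (simp add: d_def)
    have zeq: "z = dist_nearest_int (\<alpha> * real_of_int d)"
      using kl by (simp add: g_def d_def i_def j_def algebra_simps)
    show "\<delta> \<le> z"
    proof (rule ccontr)
      assume "\<not> \<delta> \<le> z"
      then have "dist_nearest_int (\<alpha> * real_of_int d) < \<delta>" using zeq by simp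
      then have "\<alpha> \<in> Uset DD \<delta> R" using Uset_cover[OF dD dnz al d1] by blast
      then show False using notin by (simp add: DD_def)
    qed
  qed
  have "\<delta> \<le> Min (g ` Pk)" using finPk ne each by (simp add: Min_ge_iff)
  then show ?thesis unfolding delta_min_def n_def[symmetric] Zeq .
qed

theorem theorem9:
  fixes x :: "nat \<Rightarrow> nat" and r :: real
  assumes pos: "\<forall>n\<ge>1. x n > 0"
    and incr: "strict_mono_on {1..} x"
    and r_pos: "r > 0"
    and energy: "\<forall>N. real (add_energy x N) \<ge> r * real N ^ 3"
  shows "\<exists>n a :: nat \<Rightarrow> nat.
           strict_mono_on {1..} n \<and> (\<forall>k\<ge>1. n k > 0) \<and> filterlim n at_top sequentially \<and>
           strict_mono_on {1..} a \<and> (\<forall>N\<ge>1. a N > 0) \<and> filterlim a at_top sequentially \<and>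
           (\<exists>c>0. \<forall>N\<ge>1. real (card {k. 1 \<le> k \<and> n k \<le> a N}) \<ge> c * real (a N)) \<and>
           (\<forall>\<epsilon>>0. AE \<alpha> in lborel. \<exists>C>0. \<forall>\<^sub>F N in sequentially.
              delta_min \<alpha> x n (a N) \<ge> C / (real (a N) * ln (real (a N)) powr (1 + \<epsilon>)))"
proof -
  define c where "c = r / 8"
  define K where "K = 2^19 / r^9"
  have cpos: "c > 0" using r_pos by (simp add: c_def)
  have injx: "inj_on x {1..}" using incr by (rule strict_mono_on_imp_inj_on)
  define PA where "PA M A \<longleftrightarrow> A \<subseteq> {1..M} \<and> real (card A) \<ge> r * real M / 8 \<and>
           real (card {int (x i) - int (x j) | i j. i \<in> A \<and> j \<in> A}) \<le> 2^19 / r^9 * real M" for M A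
  define Af where "Af M = (SOME A. PA M A)" for M
  have Af: "PA M (Af M)" if "M \<ge> 1" for M
  proof -
    have "\<exists>A. PA M A" unfolding PA_def by (rule bsg_idx[OF incr r_pos energy that])
    then show ?thesis unfolding Af_def by (rule someI_ex)
  qed
  define K' where "K' = max 2 (max K (2 / c))"
  have K'2: "K' \<ge> 2" and K'K: "K' \<ge> K" and K'c: "K' \<ge> 2 / c" by (auto simp: K'_def)
  define b where "b = bseq K'"
  have smb: "strict_mono b" using bseq_mono[OF K'2] by (simp add: b_def)
  have b0: "b 0 = 0" by (simp add: b_def)
  have bge3: "real (b (Suc N)) \<ge> 3" for N using bseq_props(5)[OF K'2] by (simp add: b_def)
  have bgeK: "real (b (Suc N)) \<ge> K' * (1 + real (b N))" for N using bseq_props(6)[OF K'2] by (simp add: b_def)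
  have lnb: "ln (real (b (Suc N))) \<ge> real (Suc N)^2 * K' * (1 + real (b N))" for N
    using bseq_props(4)[OF K'2] by (simp add: b_def)
  have bsuble: "N \<le> b N" for N using seq_suble[OF smb] .
  define S where "S = Sset b Af"
  have Spos: "i \<in> S \<Longrightarrow> i \<ge> 1" for i using Sset_pos by (simp add: S_def)
  have AfS: "Af (b (Suc N)) \<subseteq> {1..b (Suc N)}" for N using Af[of "b (Suc N)"] bge3[of N] by (simp add: PA_def)
  have dens: "real (card (S \<inter> {..b (Suc N)})) \<ge> c / 2 * real (b (Suc N))" for N
  proof -
    define B where "B = b (Suc N)"
    have B1: "B \<ge> 1" using bge3[of N] by (simp add: B_def)
    have cA: "real (card (Af B)) \<ge> c * real B" using Af[OF B1] by (simp add: c_def PA_def)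
    have "real (card (Af B \<inter> {b N<..B})) \<ge> real (card (Af B)) - real (b N)"
      using AfS[of N] by (intro card_block_ge) (simp add: B_def)
    moreover have "card (Af B \<inter> {b N<..B}) \<le> card (S \<inter> {..B})"
      using Sset_contains[of Af b N] by (intro card_mono) (auto simp: S_def B_def)
    moreover have "c * real B / 2 \<ge> real (b N)"
    proof -
      have "(2 / c) * (1 + real (b N)) \<le> K' * (1 + real (b N))"
        by (rule mult_right_mono[OF K'c]) simp
      then have "real B \<ge> (2 / c) * (1 + real (b N))"
        using bgeK[of N] unfolding B_def by linarith
      then have "c * real B \<ge> 2 * (1 + real (b N))" using cpos by (simp add: field_simps)
      then show ?thesis by simp
    qed
    ultimately show ?thesis using cA by (simp add: B_def)
  qed
  have infS: "infinite S"
  proof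
    assume fS: "finite S"
    obtain N where N: "real (card S) / (c / 2) < real N" using reals_Archimedean2 by blast
    then have "real (card S) < c / 2 * real N" using cpos by (simp add: field_simps)
    also have "\<dots> \<le> c / 2 * real (b (Suc N))" using bsuble[of "Suc N"] cpos by (intro mult_left_mono) auto
    also have "\<dots> \<le> real (card (S \<inter> {..b (Suc N)}))" by (rule dens)
    also have "\<dots> \<le> real (card S)" using fS by (simp add: card_mono)
    finally show False by simp
  qed
  define n where "n = (\<lambda>k. enumerate S (k - 1))"
  have count: "card {k. 1 \<le> k \<and> n k \<le> A} = card (S \<inter> {..A})" for A
    using enum_count[OF infS] by (simp add: n_def)
  have nmono: "strict_mono_on {1..} n"
  proof (rule strict_mono_onI)
    fix k l :: nat assume "k \<in> {1..}" "l \<in> {1..}" "k < l"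
    then have "k - 1 < l - 1" by auto
    then show "n k < n l" using enumerate_mono[OF _ infS] by (simp add: n_def)
  qed
  have npos: "\<forall>k\<ge>1. n k > 0"
  proof (intro allI impI)
    fix k :: nat
    have "n k \<in> S" unfolding n_def by (rule enumerate_in_set[OF infS])
    then have "n k \<ge> 1" by (rule Spos)
    then show "n k > 0" by simp
  qed
  have nlim: "filterlim n at_top sequentially"
    unfolding filterlim_at_top
  proof
    fix Z :: nat
    have "\<forall>k\<ge>Z + 1. Z \<le> n k"
    proof (intro allI impI)
      fix k :: nat assume "k \<ge> Z + 1"
      then have "Z \<le> k - 1" by simp
      also have "k - 1 \<le> n k" unfolding n_def by (rule le_enumerate[OF infS])
      finally show "Z \<le> n k" .
    qed
    then show "\<forall>\<^sub>F k in sequentially. Z \<le> n k" by (auto simp: eventually_sequentially)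
  qed
  have bmono: "strict_mono_on {1..} b" using smb by (simp add: strict_mono_def strict_mono_on_def)
  have bpos: "\<forall>N\<ge>1. b N > 0"
  proof (intro allI impI)
    fix N :: nat assume "N \<ge> 1"
    then have "b 0 < b N" using smb by (simp add: strict_mono_less)
    then show "b N > 0" using b0 by simp
  qed
  have blim: "filterlim b at_top sequentially" using filterlim_subseq[OF smb] .
  have densN: "\<forall>N\<ge>1. real (card {k. 1 \<le> k \<and> n k \<le> b N}) \<ge> c / 2 * real (b N)"
  proof (intro allI impI)
    fix N :: nat assume "N \<ge> 1"
    then obtain N' where "N = Suc N'" using not0_implies_Suc by fastforce
    then show "real (card {k. 1 \<le> k \<and> n k \<le> b N}) \<ge> c / 2 * real (b N)" using dens[of N'] count by simp
  qed
  have AEpart: "\<forall>\<epsilon>>0. AE \<alpha> in lborel. \<exists>C>0. \<forall>\<^sub>F N in sequentially.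
              delta_min \<alpha> x n (b N) \<ge> C / (real (b N) * ln (real (b N)) powr (1 + \<epsilon>))"
  proof (intro allI impI)
    fix \<epsilon> :: real assume eps: "\<epsilon> > 0"
    define \<delta> where "\<delta> N = 1 / (real (b (Suc N)) * ln (real (b (Suc N))) powr (1 + \<epsilon>))" for N
    define DD where "DD N = {int (x i) - int (x j) | i j. i \<in> S \<and> j \<in> S \<and> i \<le> b (Suc N) \<and> j \<le> b (Suc N) \<and> i \<noteq> j}" for N
    define U where "U R N = Uset (DD N) (\<delta> N) R" for R N
    have AfD: "real (card {int (x i) - int (x j) | i j. i \<in> Af (b (Suc N)) \<and> j \<in> Af (b (Suc N))}) \<le> K * real (b (Suc N))" for N
      using Af[of "b (Suc N)"] bge3[of N] by (simp add: PA_def K_def)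
    have finDD: "finite (DD N)" for N
      using DD_card(1)[where b=b and Af=Af and N=N and x=x and K=K, OF smb AfS[of N] AfD[of N]] by (simp add: DD_def S_def)
    have cardDD: "real (card (DD N)) \<le> K * real (b (Suc N)) + 2 * real (b N) * real (b (Suc N))" for N
      using DD_card(2)[where b=b and Af=Af and N=N and x=x and K=K, OF smb AfS[of N] AfD[of N]] by (simp add: DD_def S_def)
    have nzDD: "0 \<notin> DD N" for N
    proof
      assume "0 \<in> DD N"
      then obtain i j where ij: "i \<in> S" "j \<in> S" "i \<noteq> j" "int (x i) - int (x j) = 0" by (auto simp: DD_def)
      then have "x i = x j" by simp
      then show False using injx ij Spos by (meson atLeast_iff inj_onD)
    qed
    have ln1: "ln (real (b (Suc N))) \<ge> 1" for N
    proof -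
      have "real (Suc N)^2 * K' * (1 + real (b N)) \<ge> 1 * 2 * 1"
        using K'2 by (intro mult_mono) auto
      then show ?thesis using lnb[of N] by linarith
    qed
    have lnK: "ln (real (b (Suc N))) \<ge> real (Suc N)^2 * (K + 2 * real (b N))" for N
    proof -
      have m2: "2 * real (b N) \<le> K' * real (b N)" by (rule mult_right_mono[OF K'2]) simp
      have "K' * (1 + real (b N)) = K' + K' * real (b N)" by (simp add: algebra_simps)
      then have h1: "K + 2 * real (b N) \<le> K' * (1 + real (b N))" using m2 K'K by linarith
      have h2: "real (Suc N)^2 * (K + 2 * real (b N)) \<le> real (Suc N)^2 * (K' * (1 + real (b N)))"
        by (rule mult_left_mono[OF h1]) simp
      have h3: "real (Suc N)^2 * (K' * (1 + real (b N))) = real (Suc N)^2 * K' * (1 + real (b N))"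
        by (simp only: mult.assoc)
      show ?thesis using h2 h3 lnb[of N] by linarith
    qed
    have powr_ge: "ln (real (b (Suc N))) powr (1 + \<epsilon>) \<ge> ln (real (b (Suc N)))" for N
    proof -
      have "ln (real (b (Suc N))) powr 1 \<le> ln (real (b (Suc N))) powr (1 + \<epsilon>)"
        using eps ln1[of N] by (intro powr_mono) auto
      moreover have "ln (real (b (Suc N))) powr 1 = ln (real (b (Suc N)))" using ln1[of N] by simp
      ultimately show ?thesis by simp
    qed
    have den_ge: "real (b (Suc N)) * ln (real (b (Suc N))) powr (1 + \<epsilon>) \<ge> real (b (Suc N)) * ln (real (b (Suc N)))" for N
      using powr_ge[of N] bge3[of N] by (intro mult_left_mono) auto
    have lnpos: "ln (real (b (Suc N))) > 0" for N using ln1[of N] by simp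
    have bpos': "real (b (Suc N)) > 0" for N using bge3[of N] by simp
    have dpos: "\<delta> N > 0" for N
      using bpos'[of N] lnpos[of N] by (simp add: \<delta>_def)
    have dle: "\<delta> N \<le> 1 / (real (b (Suc N)) * ln (real (b (Suc N))))" for N
      unfolding \<delta>_def using den_ge[of N] bpos'[of N] lnpos[of N]
      by (intro divide_left_mono) auto
    have d1: "\<delta> N \<le> 1" for N
    proof -
      have "real (b (Suc N)) * ln (real (b (Suc N))) \<ge> 3 * 1" using bge3[of N] ln1[of N] by (intro mult_mono) auto
      then have "1 / (real (b (Suc N)) * ln (real (b (Suc N)))) \<le> 1" by simp
      then show ?thesis using dle[of N] by linarith
    qed
    have mU: "measure lborel (U R N) \<le> (4 * real R + 6) * inverse (real (Suc N) ^ 2)" for R N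
    proof -
      define B where "B = real (b (Suc N))"
      define L where "L = ln (real (b (Suc N)))"
      have Bp: "B > 0" and Lp: "L > 0" using bpos' lnpos by (auto simp: B_def L_def)
      have "measure lborel (U R N) \<le> real (card (DD N)) * (4 * real R + 6) * \<delta> N"
        unfolding U_def using finDD nzDD dpos[of N] by (intro Uset_measure) auto
      also have "\<dots> \<le> (K * B + 2 * real (b N) * B) * (4 * real R + 6) * (1 / (B * L))"
        using cardDD[of N] dle[of N] dpos[of N]
        by (intro mult_mono) (auto simp: B_def L_def)
      also have "\<dots> = (4 * real R + 6) * ((K + 2 * real (b N)) / L)"
        using Bp Lp by (simp add: field_simps)
      also have "(K + 2 * real (b N)) / L \<le> inverse (real (Suc N) ^ 2)"
      proof -
        have "real (Suc N)^2 * (K + 2 * real (b N)) \<le> L" using lnK[of N] by (simp add: L_def)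
        then show ?thesis using Lp by (simp add: field_simps)
      qed
      then have "(4 * real R + 6) * ((K + 2 * real (b N)) / L) \<le> (4 * real R + 6) * inverse (real (Suc N) ^ 2)"
        by (intro mult_left_mono) auto
      finally show ?thesis .
    qed
    have summ: "summable (\<lambda>N. measure lborel (U R N))" for R
    proof (rule summable_comparison_test')
      have "summable (\<lambda>N. inverse (real N ^ 2))" by (rule inverse_power_summable) simp
      then have "summable (\<lambda>N. inverse (real (Suc N) ^ 2))" by (subst summable_Suc_iff)
      then show "summable (\<lambda>N. (4 * real R + 6) * inverse (real (Suc N) ^ 2))" by (rule summable_mult)
      fix N :: nat assume "N \<ge> 0"
      show "norm (measure lborel (U R N)) \<le> (4 * real R + 6) * inverse (real (Suc N) ^ 2)"
        using mU[of R N] by simp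
    qed
    have "AE \<alpha> in lborel. \<forall>\<^sub>F N in sequentially. \<alpha> \<in> space lborel - U R N" for R
    proof (rule borel_cantelli_AE1)
      show "\<And>N. U R N \<in> sets lborel" unfolding U_def by (rule Uset_sets)
      show "\<And>N. emeasure lborel (U R N) < \<infinity>"
        unfolding U_def using finDD nzDD dpos by (intro Uset_finite_emeasure) (auto intro: less_imp_le)
      show "summable (\<lambda>N. measure lborel (U R N))" by (rule summ)
    qed
    then have "AE \<alpha> in lborel. \<forall>R::nat. \<forall>\<^sub>F N in sequentially. \<alpha> \<notin> U R N"
      by (subst AE_all_countable) auto
    then show "AE \<alpha> in lborel. \<exists>C>0. \<forall>\<^sub>F N in sequentially.
              delta_min \<alpha> x n (b N) \<ge> C / (real (b N) * ln (real (b N)) powr (1 + \<epsilon>))"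
    proof (rule eventually_mono)
      fix \<alpha> :: real assume H: "\<forall>R::nat. \<forall>\<^sub>F N in sequentially. \<alpha> \<notin> U R N"
      define R where "R = nat \<lceil>\<bar>\<alpha>\<bar>\<rceil>"
      have al: "\<bar>\<alpha>\<bar> \<le> real R" unfolding R_def by linarith
      have ev1: "\<forall>\<^sub>F N in sequentially. \<alpha> \<notin> U R N" using H by blast
      obtain N0 :: nat where N0: "4 / c \<le> real N0" using real_arch_simple by blast
      have ev2: "\<forall>\<^sub>F N in sequentially. card (S \<inter> {..b (Suc N)}) \<ge> 2"
        unfolding eventually_sequentially
      proof (intro exI allI impI)
        fix N assume "N \<ge> N0"
        then have "real (Suc N) \<ge> 4 / c" using N0 by simp
        then have "c / 2 * real (Suc N) \<ge> c / 2 * (4 / c)" using cpos by (intro mult_left_mono) auto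
        also have "c / 2 * (4 / c) = 2" using cpos by simp
        finally have "c / 2 * real (Suc N) \<ge> 2" .
        moreover have "c / 2 * real (b (Suc N)) \<ge> c / 2 * real (Suc N)"
          using bsuble[of "Suc N"] cpos by (intro mult_left_mono) auto
        ultimately have "real (card (S \<inter> {..b (Suc N)})) \<ge> 2" using dens[of N] by linarith
        then show "card (S \<inter> {..b (Suc N)}) \<ge> 2" by simp
      qed
      have "\<forall>\<^sub>F N in sequentially. delta_min \<alpha> x n (b (Suc N)) \<ge> 1 / (real (b (Suc N)) * ln (real (b (Suc N))) powr (1 + \<epsilon>))"
        using ev1 ev2
      proof eventually_elim
        case (elim N)
        have "delta_min \<alpha> x (\<lambda>k. enumerate S (k - 1)) (b (Suc N)) \<ge> \<delta> N"
        proof (rule delta_lower[OF infS _ injx dpos d1 al])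
          show "\<And>i. i \<in> S \<Longrightarrow> 1 \<le> i" by (rule Spos)
          show "\<alpha> \<notin> Uset {int (x i) - int (x j) | i j. i \<in> S \<and> j \<in> S \<and> i \<le> b (Suc N) \<and> j \<le> b (Suc N) \<and> i \<noteq> j} (\<delta> N) R"
            using elim(1) by (simp add: U_def DD_def)
          show "2 \<le> card (S \<inter> {..b (Suc N)})" by (rule elim(2))
        qed
        then have "delta_min \<alpha> x n (b (Suc N)) \<ge> \<delta> N" by (simp only: n_def)
        then show ?case by (simp only: \<delta>_def)
      qed
      then have "\<forall>\<^sub>F N in sequentially. delta_min \<alpha> x n (b N) \<ge> 1 / (real (b N) * ln (real (b N)) powr (1 + \<epsilon>))"
        by (rule eventually_sequentially_Suc[THEN iffD1])
      then show "\<exists>C>0. \<forall>\<^sub>F N in sequentially. delta_min \<alpha> x n (b N) \<ge> C / (real (b N) * ln (real (b N)) powr (1 + \<epsilon>))"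
        by (intro exI[of _ 1]) auto
    qed
  qed
  show ?thesis
    apply (rule exI[of _ n], rule exI[of _ b])
    using nmono npos nlim bmono bpos blim densN AEpart cpos
    by (intro conjI) (auto intro!: exI[of _ "c / 2"])
qed

end
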